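(* Let $\mathfrak{n}$ be the real $7$-dimensional Lie algebra with basis $e_1,\dots,e_7$ whose nonzero brackets (up to antisymmetry) are $[e_1,e_2]=e_4$, $[e_1,e_4]=e_5$, $[e_1,e_5]=e_6$, $[e_1,e_6]=e_7$, $[e_2,e_3]=e_6$, $[e_2,e_4]=e_6$, $[e_2,e_5]=e_7$, $[e_3,e_4]=-e_7$. Then $\mathfrak{n}$ is an Einstein nilradical.
   Context: A real nilpotent Lie algebra $\mathfrak{n}$ is called an Einstein nilradical if it admits an inner product such that the left-invariant Riemannian metric it defines on the simply connected nilpotent Lie group with Lie algebra $\mathfrak{n}$ is a nilsoliton, i.e. its Ricci operator satisfies $\mathrm{Ric}=c\,\mathrm{Id}+D$ for some $c\in\mathbb{R}$ and some derivation $D$ of $\mathfrak{n}$. Brackets of basis elements not listed are zero. *)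

theory Defs
  imports "HOL-Analysis.Analysis"
begin

text \<open>The underlying vector space of the Lie algebra is real^7.  The basis vector
  e_i (i = 1..7) is the standard unit vector with index (i-1) of the numeral type 7.\<close>

definition ebas :: "nat \<Rightarrow> real^7" where
  "ebas i = axis (of_nat (i - 1)) 1"

definition coord :: "nat \<Rightarrow> real^7 \<Rightarrow> real" where
  "coord i x = x $ (of_nat (i - 1))"

definition brb0 :: "nat \<Rightarrow> nat \<Rightarrow> real^7" where
  "brb0 i j =
    (if (i, j) = (1, 2) then ebas 4
     else if (i, j) = (1, 4) then ebas 5
     else if (i, j) = (1, 5) then ebas 6
     else if (i, j) = (1, 6) then ebas 7
     else if (i, j) = (2, 3) then ebas 6
     else if (i, j) = (2, 4) then ebas 6
     else if (i, j) = (2, 5) then ebas 7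
     else if (i, j) = (3, 4) then - ebas 7
     else 0)"

definition brb :: "nat \<Rightarrow> nat \<Rightarrow> real^7" where
  "brb i j = (if i < j then brb0 i j else if j < i then - brb0 j i else 0)"

definition brk :: "real^7 \<Rightarrow> real^7 \<Rightarrow> real^7" where
  "brk x y = (\<Sum>i\<in>{1..7}. \<Sum>j\<in>{1..7}. (coord i x * coord j y) *\<^sub>R brb i j)"

definition is_derivation :: "(real^7 \<Rightarrow> real^7) \<Rightarrow> bool" where
  "is_derivation D \<longleftrightarrow> linear D \<and>
     (\<forall>x y. D (brk x y) = brk (D x) y + brk x (D y))"

definition is_inner_product :: "(real^7 \<Rightarrow> real^7 \<Rightarrow> real) \<Rightarrow> bool" where
  "is_inner_product ip \<longleftrightarrow> bilinear ip \<and> (\<forall>x y. ip x y = ip y x) \<and>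
     (\<forall>x. x \<noteq> 0 \<longrightarrow> ip x x > 0)"

definition is_orthonormal_basis ::
  "(real^7 \<Rightarrow> real^7 \<Rightarrow> real) \<Rightarrow> (nat \<Rightarrow> real^7) \<Rightarrow> bool" where
  "is_orthonormal_basis ip u \<longleftrightarrow>
     (\<forall>i\<in>{1..7}. \<forall>j\<in>{1..7}. ip (u i) (u j) = (if i = j then 1 else 0))"

text \<open>Ricci form of the left-invariant metric defined by ip on the nilpotent Lie group,
  computed in an ip-orthonormal basis u_1..u_7 (standard formula for nilpotent Lie
  algebras, independent of the choice of orthonormal basis):
  ric(X,Y) = -1/2 sum_{i,j} ip([X,u_i],u_j) ip([Y,u_i],u_j)
             + 1/4 sum_{i,j} ip([u_i,u_j],X) ip([u_i,u_j],Y).\<close>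

definition ric_form ::
  "(real^7 \<Rightarrow> real^7 \<Rightarrow> real) \<Rightarrow> (nat \<Rightarrow> real^7) \<Rightarrow> real^7 \<Rightarrow> real^7 \<Rightarrow> real" where
  "ric_form ip u X Y =
     - (1/2) * (\<Sum>i\<in>{1..7}. \<Sum>j\<in>{1..7}. ip (brk X (u i)) (u j) * ip (brk Y (u i)) (u j))
     + (1/4) * (\<Sum>i\<in>{1..7}. \<Sum>j\<in>{1..7}. ip (brk (u i) (u j)) X * ip (brk (u i) (u j)) Y)"

text \<open>Ricci operator: the ip-symmetric endomorphism with ip (Ric X) Y = ric(X,Y).\<close>

definition ricci_op ::
  "(real^7 \<Rightarrow> real^7 \<Rightarrow> real) \<Rightarrow> (nat \<Rightarrow> real^7) \<Rightarrow> real^7 \<Rightarrow> real^7" where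
  "ricci_op ip u X = (\<Sum>k\<in>{1..7}. ric_form ip u X (u k) *\<^sub>R u k)"

definition is_nilsoliton :: "(real^7 \<Rightarrow> real^7 \<Rightarrow> real) \<Rightarrow> bool" where
  "is_nilsoliton ip \<longleftrightarrow> (\<exists>u. is_orthonormal_basis ip u \<and>
     (\<exists>c D. is_derivation D \<and> (\<forall>X. ricci_op ip u X = c *\<^sub>R X + D X)))"

definition einstein_nilradical :: bool where
  "einstein_nilradical \<longleftrightarrow> (\<exists>ip. is_inner_product ip \<and> is_nilsoliton ip)"

end

theory Submission
  imports Defs
begin

lemma exhaust_7:
  fixes x :: 7
  shows "x = of_nat 0 \<or> x = of_nat 1 \<or> x = of_nat 2 \<or> x = of_nat 3 \<or> x = of_nat 4 \<or> x = of_nat 5 \<or> x = of_nat 6"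
proof (induct x)
  case (of_int z)
  then have "z = 0 \<or> z = 1 \<or> z = 2 \<or> z = 3 \<or> z = 4 \<or> z = 5 \<or> z = 6" by fastforce
  then show ?case by auto
qed

lemma set7: "{1..7::nat} = {1,2,3,4,5,6,7}" by auto

lemma sum7: "(\<Sum>k\<in>{1..7::nat}. f k) = f 1 + f 2 + f 3 + f 4 + f 5 + f 6 + f 7"
  unfolding set7 by (simp add: algebra_simps)

lemma ball7: "(\<forall>k\<in>{1..7::nat}. P k) \<longleftrightarrow> P 1 \<and> P 2 \<and> P 3 \<and> P 4 \<and> P 5 \<and> P 6 \<and> P 7"
  unfolding set7 by simp

lemma vec7_eq: "(x::real^7) = y \<longleftrightarrow> (\<forall>k\<in>{1..7}. coord k x = coord k y)"
proof
  assume "\<forall>k\<in>{1..7}. coord k x = coord k y"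
  then have h: "coord 1 x = coord 1 y \<and> coord 2 x = coord 2 y \<and> coord 3 x = coord 3 y \<and> coord 4 x = coord 4 y \<and> coord 5 x = coord 5 y \<and> coord 6 x = coord 6 y \<and> coord 7 x = coord 7 y"
    unfolding ball7 .
  show "x = y" unfolding vec_eq_iff
  proof
    fix i :: 7
    show "x $ i = y $ i" using exhaust_7[of i] h by (auto simp: coord_def)
  qed
qed simp

lemma coord_add[simp]: "coord k (x + y) = coord k x + coord k y" by (simp add: coord_def)
lemma coord_diff[simp]: "coord k (x - y) = coord k x - coord k y" by (simp add: coord_def)
lemma coord_neg[simp]: "coord k (- x) = - coord k x" by (simp add: coord_def)
lemma coord_zero[simp]: "coord k 0 = 0" by (simp add: coord_def)
lemma coord_scaleR[simp]: "coord k (c *\<^sub>R x) = c * coord k x" by (simp add: coord_def)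
lemma coord_sum[simp]: "coord k (sum f A) = (\<Sum>a\<in>A. coord k (f a))" by (simp add: coord_def)
lemma coord_ebas: "coord k (ebas m) = (if (of_nat (k - 1) :: 7) = of_nat (m - 1) then 1 else 0)"
  by (simp add: coord_def ebas_def axis_def)

lemma coord_brk_gen: "coord k (brk x y) = (\<Sum>i\<in>{1..7}. \<Sum>j\<in>{1..7}. coord i x * coord j y * coord k (brb i j))"
  by (simp add: brk_def)

lemma coord_brk:
  "coord 1 (brk x y) = 0"
  "coord 2 (brk x y) = 0"
  "coord 3 (brk x y) = 0"
  "coord 4 (brk x y) = coord 1 x * coord 2 y - coord 2 x * coord 1 y"
  "coord 5 (brk x y) = coord 1 x * coord 4 y - coord 4 x * coord 1 y"
  "coord 6 (brk x y) = coord 1 x * coord 5 y - coord 5 x * coord 1 y + coord 2 x * coord 3 y - coord 3 x * coord 2 y + coord 2 x * coord 4 y - coord 4 x * coord 2 y"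
  "coord 7 (brk x y) = coord 1 x * coord 6 y - coord 6 x * coord 1 y + coord 2 x * coord 5 y - coord 5 x * coord 2 y - coord 3 x * coord 4 y + coord 4 x * coord 3 y"
  unfolding coord_brk_gen sum7 by (simp_all add: brb_def brb0_def coord_ebas algebra_simps)

lemma coord_brk_Suc0[simp]: "coord (Suc 0) (brk x y) = 0"
  using coord_brk(1) by simp


definition vb :: "nat \<Rightarrow> real^7" where
  "vb k = (if k = 3 then ebas 3 + (-5/12) *\<^sub>R ebas 4 else ebas k)"

definition cv :: "nat \<Rightarrow> real^7 \<Rightarrow> real" where
  "cv k x = (if k = 4 then coord 4 x + 5/12 * coord 3 x else coord k x)"

definition qq :: "nat \<Rightarrow> real" where
  "qq k = (if k = 3 then 25/42 else if k = 4 then 120/133 else if k = 5 then 100/133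
           else if k = 6 then 500/931 else if k = 7 then 6875/17689 else 1)"

definition ipm :: "real^7 \<Rightarrow> real^7 \<Rightarrow> real" where
  "ipm x y = (\<Sum>k\<in>{1..7}. qq k * cv k x * cv k y)"

definition ub :: "nat \<Rightarrow> real^7" where
  "ub k = (1 / sqrt (qq k)) *\<^sub>R vb k"

definition wt :: "nat \<Rightarrow> real" where
  "wt k = (if k = 1 then 1 else if k = 2 then 2 else if k = 3 then 3 else if k = 4 then 3
           else if k = 5 then 4 else if k = 6 then 5 else 6)"

definition Dm :: "real^7 \<Rightarrow> real^7" where
  "Dm x = (\<Sum>k\<in>{1..7}. (15/28 * wt k * coord k x) *\<^sub>R ebas k)"

lemma qq_pos: "qq k > 0" by (simp add: qq_def)

lemma cv_add[simp]: "cv k (x + y) = cv k x + cv k y" by (simp add: cv_def algebra_simps)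
lemma cv_scaleR[simp]: "cv k (c *\<^sub>R x) = c * cv k x" by (simp add: cv_def algebra_simps)

lemma cv_vb: "k \<in> {1..7} \<Longrightarrow> j \<in> {1..7} \<Longrightarrow> cv k (vb j) = (if k = j then 1 else 0)"
  unfolding set7 by (auto simp: cv_def vb_def coord_ebas)

lemma cv_ub: "k \<in> {1..7} \<Longrightarrow> j \<in> {1..7} \<Longrightarrow> cv k (ub j) = (if k = j then 1 / sqrt (qq j) else 0)"
  by (simp add: ub_def cv_vb)

lemma ipm_ub: assumes "j \<in> {1..7}" shows "ipm x (ub j) = sqrt (qq j) * cv j x"
proof -
  have "ipm x (ub j) = (\<Sum>k\<in>{1..7}. if k = j then qq j * cv j x / sqrt (qq j) else 0)"
    unfolding ipm_def
  proof (rule sum.cong)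
    fix k :: nat assume k: "k \<in> {1..7}"
    show "qq k * cv k x * cv k (ub j) = (if k = j then qq j * cv j x / sqrt (qq j) else 0)"
      using cv_ub[OF k assms] by simp
  qed simp
  also have "\<dots> = qq j * cv j x / sqrt (qq j)" using assms by simp
  also have "\<dots> = sqrt (qq j) * cv j x"
    using qq_pos[of j] by (metis real_div_sqrt less_imp_le mult.commute times_divide_eq_left)
  finally show ?thesis .
qed

lemma ipm_scaleL: "ipm (c *\<^sub>R x) y = c * ipm x y"
  by (simp add: ipm_def sum_distrib_left algebra_simps)
lemma ipm_scaleR: "ipm x (c *\<^sub>R y) = c * ipm x y"
  by (simp add: ipm_def sum_distrib_left algebra_simps)

lemma brk_scaleL: "brk (c *\<^sub>R x) y = c *\<^sub>R brk x y"
  unfolding vec7_eq ball7 by (simp add: coord_brk algebra_simps)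
lemma brk_scaleR: "brk x (c *\<^sub>R y) = c *\<^sub>R brk x y"
  unfolding vec7_eq ball7 by (simp add: coord_brk algebra_simps)


definition rf :: "real^7 \<Rightarrow> real^7 \<Rightarrow> real" where
  "rf X Y = - (1/2) * (\<Sum>i\<in>{1..7}. \<Sum>j\<in>{1..7}. (qq j / qq i) * (cv j (brk X (vb i)) * cv j (brk Y (vb i))))
     + (1/4) * (\<Sum>i\<in>{1..7}. \<Sum>j\<in>{1..7}. (1 / (qq i * qq j)) * (ipm (brk (vb i) (vb j)) X * ipm (brk (vb i) (vb j)) Y))"

lemma rf1: "rf X (vb 1) = qq 1 * (-95/56) * cv 1 X"
  unfolding rf_def sum7 ipm_def
  by (simp add: cv_def coord_brk vb_def coord_ebas qq_def algebra_simps)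

lemma rf2: "rf X (vb 2) = qq 2 * (-65/56) * cv 2 X"
  unfolding rf_def sum7 ipm_def
  by (simp add: cv_def coord_brk vb_def coord_ebas qq_def algebra_simps)

lemma rf3: "rf X (vb 3) = qq 3 * (-35/56) * cv 3 X"
  unfolding rf_def sum7 ipm_def
  by (simp add: cv_def coord_brk vb_def coord_ebas qq_def algebra_simps)

lemma rf4: "rf X (vb 4) = qq 4 * (-35/56) * cv 4 X"
  unfolding rf_def sum7 ipm_def
  apply (simp add: cv_def coord_brk vb_def coord_ebas qq_def algebra_simps)
  apply (simp add: field_simps)
  done

lemma rf5: "rf X (vb 5) = qq 5 * (-5/56) * cv 5 X"
  unfolding rf_def sum7 ipm_def
  by (simp add: cv_def coord_brk vb_def coord_ebas qq_def algebra_simps)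

lemma rf6: "rf X (vb 6) = qq 6 * (25/56) * cv 6 X"
  unfolding rf_def sum7 ipm_def
  by (simp add: cv_def coord_brk vb_def coord_ebas qq_def algebra_simps)

lemma rf7: "rf X (vb 7) = qq 7 * (55/56) * cv 7 X"
  unfolding rf_def sum7 ipm_def
  by (simp add: cv_def coord_brk vb_def coord_ebas qq_def algebra_simps)


lemma sq_aux1: assumes "a > 0" "b > 0"
  shows "(sqrt b * ((1 / sqrt a) * u)) * (sqrt b * ((1 / sqrt a) * w)) = b / a * (u * w)"
proof -
  have "sqrt b * sqrt b = b" "sqrt a * sqrt a = a" using assms by simp_all
  then show ?thesis using assms by (simp add: field_simps)
qed

lemma sq_aux2: assumes "a > 0" "b > 0"
  shows "((1 / sqrt a) * ((1 / sqrt b) * u)) * ((1 / sqrt a) * ((1 / sqrt b) * w)) = 1 / (b * a) * (u * w)"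
proof -
  have "sqrt b * sqrt b = b" "sqrt a * sqrt a = a" using assms by simp_all
  then show ?thesis using assms by (simp add: field_simps)
qed

lemma ric_rf: "ric_form ipm ub X Y = rf X Y"
proof -
  have A: "(\<Sum>i\<in>{1..7}. \<Sum>j\<in>{1..7}. ipm (brk X (ub i)) (ub j) * ipm (brk Y (ub i)) (ub j))
     = (\<Sum>i\<in>{1..7}. \<Sum>j\<in>{1..7}. (qq j / qq i) * (cv j (brk X (vb i)) * cv j (brk Y (vb i))))"
  proof (intro sum.cong refl)
    fix i j :: nat assume j: "j \<in> {1..7}"
    show "ipm (brk X (ub i)) (ub j) * ipm (brk Y (ub i)) (ub j) = (qq j / qq i) * (cv j (brk X (vb i)) * cv j (brk Y (vb i)))"
      unfolding ipm_ub[OF j] unfolding ub_def brk_scaleR cv_scaleR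
      by (rule sq_aux1[OF qq_pos qq_pos])
  qed
  have B: "(\<Sum>i\<in>{1..7}. \<Sum>j\<in>{1..7}. ipm (brk (ub i) (ub j)) X * ipm (brk (ub i) (ub j)) Y)
     = (\<Sum>i\<in>{1..7}. \<Sum>j\<in>{1..7}. (1 / (qq i * qq j)) * (ipm (brk (vb i) (vb j)) X * ipm (brk (vb i) (vb j)) Y))"
  proof (intro sum.cong refl)
    fix i j :: nat
    show "ipm (brk (ub i) (ub j)) X * ipm (brk (ub i) (ub j)) Y = (1 / (qq i * qq j)) * (ipm (brk (vb i) (vb j)) X * ipm (brk (vb i) (vb j)) Y)"
      unfolding ub_def brk_scaleR brk_scaleL ipm_scaleL
      by (rule sq_aux2[OF qq_pos qq_pos])
  qed
  show ?thesis unfolding ric_form_def rf_def A B ..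
qed

lemma rf_scale: "rf X (c *\<^sub>R Y) = c * rf X Y"
  unfolding rf_def brk_scaleL cv_scaleR ipm_scaleR
  by (simp add: sum_distrib_left algebra_simps)

lemma ricci_eq: "ricci_op ipm ub X = (\<Sum>k\<in>{1..7}. (rf X (vb k) / qq k) *\<^sub>R vb k)"
  unfolding ricci_op_def ric_rf
proof (intro sum.cong refl)
  fix k
  have "sqrt (qq k) * sqrt (qq k) = qq k" using qq_pos[of k] by simp
  then show "rf X (ub k) *\<^sub>R ub k = (rf X (vb k) / qq k) *\<^sub>R vb k"
    unfolding ub_def rf_scale using qq_pos[of k] by (simp add: field_simps)
qed

lemma main_ricci: "ricci_op ipm ub X = (-125/56) *\<^sub>R X + Dm X"
  unfolding ricci_eq sum7 rf1 rf2 rf3 rf4 rf5 rf6 rf7 vec7_eq ball7 Dm_def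
  apply (simp add: cv_def vb_def coord_ebas qq_def wt_def algebra_simps)
  apply (simp add: field_simps)
  done


lemma ipm_addL: "ipm (x + y) z = ipm x z + ipm y z"
  by (simp add: ipm_def sum.distrib[symmetric] algebra_simps)
lemma ipm_addR: "ipm z (x + y) = ipm z x + ipm z y"
  by (simp add: ipm_def sum.distrib[symmetric] algebra_simps)

lemma ipm_inner: "is_inner_product ipm"
  unfolding is_inner_product_def
proof (intro conjI allI impI)
  show "bilinear ipm"
    unfolding bilinear_def
    by (auto intro!: linearI simp: ipm_addL ipm_addR ipm_scaleL ipm_scaleR)
next
  fix x y show "ipm x y = ipm y x" by (simp add: ipm_def algebra_simps)
next
  fix x :: "real^7" assume nz: "x \<noteq> 0"
  have e: "ipm x x = qq 1 * (cv 1 x)\<^sup>2 + qq 2 * (cv 2 x)\<^sup>2 + qq 3 * (cv 3 x)\<^sup>2 + qq 4 * (cv 4 x)\<^sup>2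
     + qq 5 * (cv 5 x)\<^sup>2 + qq 6 * (cv 6 x)\<^sup>2 + qq 7 * (cv 7 x)\<^sup>2"
    unfolding ipm_def sum7 by (simp add: power2_eq_square algebra_simps)
  have nn: "qq k * (cv k x)\<^sup>2 \<ge> 0" for k using qq_pos[of k] by simp
  have ps: "cv k x \<noteq> 0 \<Longrightarrow> qq k * (cv k x)\<^sup>2 > 0" for k using qq_pos[of k] by simp
  have "\<exists>k\<in>{1..7}. cv k x \<noteq> 0"
  proof (rule ccontr)
    assume "\<not> ?thesis"
    then have "\<forall>k\<in>{1..7}. cv k x = 0" by blast
    then have "\<forall>k\<in>{1..7}. coord k x = coord k 0" unfolding ball7 by (simp add: cv_def)
    then have "x = 0" using vec7_eq by blast
    then show False using nz by simp
  qed
  then obtain k where k: "k \<in> {1..7}" "cv k x \<noteq> 0" by blast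
  then have "k = 1 \<or> k = 2 \<or> k = 3 \<or> k = 4 \<or> k = 5 \<or> k = 6 \<or> k = 7" unfolding set7 by auto
  then show "ipm x x > 0"
    unfolding e using ps[OF k(2)] nn[of 1] nn[of 2] nn[of 3] nn[of 4] nn[of 5] nn[of 6] nn[of 7]
    by auto
qed

lemma ub_orth: "is_orthonormal_basis ipm ub"
  unfolding is_orthonormal_basis_def
proof (intro ballI)
  fix i j :: nat assume i: "i \<in> {1..7}" and j: "j \<in> {1..7}"
  have "sqrt (qq i) * (1 / sqrt (qq i)) = 1" using qq_pos[of i] by simp
  then show "ipm (ub i) (ub j) = (if i = j then 1 else 0)"
    unfolding ipm_ub[OF j] cv_ub[OF j i] by auto
qed

lemma coord_Dm:
  "coord 1 (Dm x) = 15/28 * coord 1 x"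
  "coord 2 (Dm x) = 15/28 * 2 * coord 2 x"
  "coord 3 (Dm x) = 15/28 * 3 * coord 3 x"
  "coord 4 (Dm x) = 15/28 * 3 * coord 4 x"
  "coord 5 (Dm x) = 15/28 * 4 * coord 5 x"
  "coord 6 (Dm x) = 15/28 * 5 * coord 6 x"
  "coord 7 (Dm x) = 15/28 * 6 * coord 7 x"
  unfolding Dm_def sum7 by (simp_all add: coord_ebas wt_def)

lemma coord_Dm_Suc0: "coord (Suc 0) (Dm x) = 15/28 * coord (Suc 0) x"
  using coord_Dm(1) by simp

lemma Dm_der: "is_derivation Dm"
  unfolding is_derivation_def
proof (intro conjI allI)
  show "linear Dm"
    by (rule linearI) (unfold vec7_eq ball7, simp_all add: coord_Dm coord_Dm_Suc0 algebra_simps)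
next
  fix x y show "Dm (brk x y) = brk (Dm x) y + brk x (Dm y)"
    unfolding vec7_eq ball7 by (simp add: coord_Dm coord_Dm_Suc0 coord_brk algebra_simps)
qed

theorem mainTheorem9:
  shows "einstein_nilradical"
  unfolding einstein_nilradical_def is_nilsoliton_def
  using ipm_inner ub_orth Dm_der main_ricci by blast

end
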